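(* Let $H:\mathscr{A}(\mathbb{R})\to\mathscr{A}(\mathbb{R})$ be the Hardy operator $Hf(x)=\frac1x\int_0^xf(y)\,dy$, and let $A=\sum_{k=0}^K a_kH^k$ with $a_0,a_1,\dots,a_K\in\mathbb{C}$. Then $A$ generates a $C_0$-group on $\mathscr{A}(\mathbb{R})$.
   Context: $\mathscr{A}(\mathbb{R})$ denotes the space of real analytic functions on $\mathbb{R}$ with the inductive limit topology $\operatorname{ind}_{U\supset\mathbb{R}}H(U)$ ($U$ complex open neighbourhoods of $\mathbb{R}$, $H(U)$ with compact-open topology). $H^0$ is the identity. A $C_0$-group is a family $(T_t)_{t\in\mathbb{R}}$ of continuous linear operators on $\mathscr{A}(\mathbb{R})$ with $T_tT_s=T_{t+s}$ for all $t,s\in\mathbb{R}$, $T_0=I$, and $t\mapsto T_tf$ continuous on $\mathbb{R}$ for each $f$; its generator is $Af=\lim_{t\to0}(T_tf-f)/t$ on the domain where the limit exists; "$A$ generates" means $A$ (with domain $\mathscr{A}(\mathbb{R})$) is the generator. *)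

theory Defs
  imports "HOL-Analysis.Analysis"
begin

definition real_analytic_fns :: "(real \<Rightarrow> complex) set" where
  "real_analytic_fns = {f. \<exists>U g. open U \<and> (\<forall>x::real. complex_of_real x \<in> U) \<and>
      g holomorphic_on U \<and> (\<forall>x. f x = g (complex_of_real x))}"

text \<open>Continuous seminorms of the locally convex inductive limit topology ind_U H(U):
  seminorms on A(R) whose restriction to every H(U) (compact-open topology) is continuous,
  i.e. dominated by C times the sup-norm over some compact K contained in U.\<close>
definition ind_seminorm :: "((real \<Rightarrow> complex) \<Rightarrow> real) \<Rightarrow> bool" where
  "ind_seminorm p \<longleftrightarrow>
     (\<forall>f\<in>real_analytic_fns. 0 \<le> p f) \<and>
     (\<forall>f\<in>real_analytic_fns. \<forall>g\<in>real_analytic_fns. p (\<lambda>x. f x + g x) \<le> p f + p g) \<and>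
     (\<forall>c. \<forall>f\<in>real_analytic_fns. p (\<lambda>x. c * f x) = cmod c * p f) \<and>
     (\<forall>U. open U \<and> (\<forall>x::real. complex_of_real x \<in> U) \<longrightarrow>
        (\<exists>K C. compact K \<and> K \<subseteq> U \<and>
           (\<forall>g M. g holomorphic_on U \<and> (\<forall>z\<in>K. cmod (g z) \<le> M) \<longrightarrow>
              p (\<lambda>x. g (complex_of_real x)) \<le> C * M)))"

definition tendsto_A :: "('a \<Rightarrow> real \<Rightarrow> complex) \<Rightarrow> (real \<Rightarrow> complex) \<Rightarrow> 'a filter \<Rightarrow> bool" where
  "tendsto_A F L net \<longleftrightarrow>
     (\<forall>q. ind_seminorm q \<longrightarrow> ((\<lambda>t. q (\<lambda>x. F t x - L x)) \<longlongrightarrow> 0) net)"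

definition cont_lin_op :: "((real \<Rightarrow> complex) \<Rightarrow> (real \<Rightarrow> complex)) \<Rightarrow> bool" where
  "cont_lin_op T \<longleftrightarrow>
     (\<forall>f\<in>real_analytic_fns. T f \<in> real_analytic_fns) \<and>
     (\<forall>f\<in>real_analytic_fns. \<forall>g\<in>real_analytic_fns. T (\<lambda>x. f x + g x) = (\<lambda>x. T f x + T g x)) \<and>
     (\<forall>c. \<forall>f\<in>real_analytic_fns. T (\<lambda>x. c * f x) = (\<lambda>x. c * T f x)) \<and>
     (\<forall>q. ind_seminorm q \<longrightarrow>
        (\<exists>p C. ind_seminorm p \<and> (\<forall>f\<in>real_analytic_fns. q (T f) \<le> C * p f)))"

definition C0_group :: "(real \<Rightarrow> (real \<Rightarrow> complex) \<Rightarrow> (real \<Rightarrow> complex)) \<Rightarrow> bool" where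
  "C0_group T \<longleftrightarrow>
     (\<forall>t. cont_lin_op (T t)) \<and>
     (\<forall>t s. \<forall>f\<in>real_analytic_fns. T t (T s f) = T (t + s) f) \<and>
     (\<forall>f\<in>real_analytic_fns. T 0 f = f) \<and>
     (\<forall>f\<in>real_analytic_fns. \<forall>t0. tendsto_A (\<lambda>t. T t f) (T t0 f) (at t0))"

text \<open>A (with domain all of A(R)) is the generator of T: the generator's domain consists of
  those f in A(R) for which the difference quotient converges in A(R); we require that this
  holds for every f in A(R) with limit A f (limits are unique, the topology being Hausdorff).\<close>
definition generates :: "((real \<Rightarrow> complex) \<Rightarrow> (real \<Rightarrow> complex)) \<Rightarrow>
    (real \<Rightarrow> (real \<Rightarrow> complex) \<Rightarrow> (real \<Rightarrow> complex)) \<Rightarrow> bool" where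
  "generates A T \<longleftrightarrow>
     (\<forall>f\<in>real_analytic_fns. A f \<in> real_analytic_fns \<and>
        tendsto_A (\<lambda>t x. (T t f x - f x) / complex_of_real t) (A f) (at 0))"

definition hardy :: "(real \<Rightarrow> complex) \<Rightarrow> (real \<Rightarrow> complex)" where
  "hardy f x = (if x = 0 then f 0
     else if 0 < x then integral {0..x} f / complex_of_real x
     else - integral {x..0} f / complex_of_real x)"

definition hardy_poly :: "nat \<Rightarrow> (nat \<Rightarrow> complex) \<Rightarrow> (real \<Rightarrow> complex) \<Rightarrow> (real \<Rightarrow> complex)" where
  "hardy_poly K a f = (\<lambda>x. \<Sum>k\<le>K. a k * (hardy ^^ k) f x)"

end

theory Submission
  imports Defs "HOL-Complex_Analysis.Complex_Analysis"
begin

definition star0 :: "complex set \<Rightarrow> bool" where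
  "star0 S \<longleftrightarrow> (\<forall>z\<in>S. closed_segment 0 z \<subseteq> S)"

definition goodV :: "complex set \<Rightarrow> bool" where
  "goodV V \<longleftrightarrow> open V \<and> star0 V \<and> (\<forall>x::real. complex_of_real x \<in> V)"

definition Hc :: "(complex \<Rightarrow> complex) \<Rightarrow> complex \<Rightarrow> complex" where
  "Hc g z = (if z = 0 then g 0 else contour_integral (linepath 0 z) g / z)"

lemma star0_0: "star0 S \<Longrightarrow> z \<in> S \<Longrightarrow> 0 \<in> S"
  unfolding star0_def by auto

lemma star0_seg: "star0 S \<Longrightarrow> z \<in> S \<Longrightarrow> closed_segment 0 z \<subseteq> S"
  unfolding star0_def by auto

lemma goodV_0: "goodV V \<Longrightarrow> 0 \<in> V"
  unfolding goodV_def by (metis of_real_0)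

lemma Hc_local:
  assumes "star0 S" "z \<in> S" "\<And>w. w \<in> S \<Longrightarrow> F w = G w"
  shows "Hc F z = Hc G z"
proof (cases "z = 0")
  case True then show ?thesis using assms by (simp add: Hc_def)
next
  case False
  have "contour_integral (linepath 0 z) F = contour_integral (linepath 0 z) G"
    using star0_seg[OF assms(1,2)] assms(3) by (intro contour_integral_eq) auto
  then show ?thesis using False by (simp add: Hc_def)
qed

lemma Hc_bound:
  assumes "star0 S" "continuous_on S g" "\<And>w. w\<in>S \<Longrightarrow> cmod (g w) \<le> M" "z \<in> S"
  shows "cmod (Hc g z) \<le> M"
proof (cases "z = 0")
  case True then show ?thesis using assms by (simp add: Hc_def)
next
  case False
  have M0: "0 \<le> M" using assms(3)[OF assms(4)] by (meson norm_ge_zero order_trans)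
  have seg: "closed_segment 0 z \<subseteq> S" using star0_seg[OF assms(1,4)] .
  have "g contour_integrable_on linepath 0 z"
    by (rule contour_integrable_continuous_linepath, rule continuous_on_subset[OF assms(2) seg])
  then have "cmod (contour_integral (linepath 0 z) g) \<le> M * cmod (z - 0)"
    using seg assms(3) M0
    by (intro has_contour_integral_bound_linepath[OF has_contour_integral_integral]) auto
  then show ?thesis using False by (simp add: Hc_def norm_divide divide_le_eq)
qed

lemma contour_integral_cmult_any:
  "contour_integral p (\<lambda>x. c * f x) = c * contour_integral p f"
proof (cases "f contour_integrable_on p")
  case True then show ?thesis by (simp add: contour_integral_lmul)
next
  case False
  show ?thesis
  proof (cases "c = 0")
    case True then show ?thesis by simp
  next
    case c: False
    have "\<not> (\<lambda>x. c * f x) contour_integrable_on p"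
    proof
      assume "(\<lambda>x. c * f x) contour_integrable_on p"
      then have "(\<lambda>x. inverse c * (c * f x)) contour_integrable_on p"
        by (rule contour_integrable_lmul)
      moreover have "(\<lambda>x. inverse c * (c * f x)) = f" using c by (auto simp: fun_eq_iff)
      ultimately show False using False by simp
    qed
    then show ?thesis using False by (simp add: not_integrable_contour_integral)
  qed
qed

lemma Hc_cmult: "Hc (\<lambda>w. c * g w) = (\<lambda>z. c * Hc g z)"
  by (auto simp: Hc_def contour_integral_cmult_any fun_eq_iff)

lemma Hc_add:
  assumes "star0 S" "continuous_on S g1" "continuous_on S g2" "z \<in> S"
  shows "Hc (\<lambda>w. g1 w + g2 w) z = Hc g1 z + Hc g2 z"
proof (cases "z = 0")
  case True then show ?thesis by (simp add: Hc_def)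
next
  case False
  have seg: "closed_segment 0 z \<subseteq> S" using star0_seg[OF assms(1,4)] .
  have "g1 contour_integrable_on linepath 0 z" "g2 contour_integrable_on linepath 0 z"
    by (rule contour_integrable_continuous_linepath, rule continuous_on_subset[OF _ seg], fact)+
  then show ?thesis using False by (simp add: Hc_def contour_integral_add add_divide_distrib)
qed

lemma prim_deriv:
  assumes V: "open V" "star0 V" "0 \<in> V" and hol: "g holomorphic_on V" and x: "x \<in> V"
  shows "((\<lambda>z. contour_integral (linepath 0 z) g) has_field_derivative g x) (at x)"
proof -
  have contf: "continuous_on V g" using hol by (rule holomorphic_on_imp_continuous_on)
  have subs: "\<And>y. y \<in> V \<Longrightarrow> closed_segment 0 y \<subseteq> V" using V(2) by (simp add: star0_seg)
  { fix b c
    assume bc: "closed_segment b c \<subseteq> V"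
    then have abcs: "convex hull {0, b, c} \<subseteq> V"
      by (simp add: V(3) subs starlike_convex_subset)
    then have "continuous_on (convex hull {0, b, c}) g"
      by (simp add: continuous_on_subset [OF contf])
    moreover have "\<And>x. x \<in> interior (convex hull {0, b, c}) - {} \<Longrightarrow> g field_differentiable at x"
    proof -
      fix x assume "x \<in> interior (convex hull {0, b, c}) - {}"
      then have "x \<in> V" using abcs interior_subset by blast
      then show "g field_differentiable at x"
        using hol V(1) holomorphic_on_imp_differentiable_at by blast
    qed
    ultimately have "(g has_contour_integral 0) (linepath 0 b +++ linepath b c +++ linepath c 0)"
      by (intro Cauchy_theorem_triangle_cofinite[where S="{}"]) auto
    then have "contour_integral (linepath 0 b) g + contour_integral (linepath b c) g +
                       contour_integral (linepath c 0) g = 0"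
      by (rule has_chain_integral_chain_integral3)
  } note 0 = this
  show ?thesis
    by (rule triangle_contour_integrals_starlike_primitive[OF contf V(3) V(1) x subs 0])
qed

lemma Hc_holo:
  assumes V: "open V" "star0 V" "0 \<in> V" and hol: "g holomorphic_on V"
  shows "Hc g holomorphic_on V"
proof -
  define G where "G = (\<lambda>z. contour_integral (linepath 0 z) g)"
  have d: "\<And>x. x \<in> V \<Longrightarrow> (G has_field_derivative g x) (at x)"
    unfolding G_def using prim_deriv[OF V hol] by blast
  have Gh: "G holomorphic_on V"
    using d V(1) holomorphic_on_open by blast
  have G0: "G 0 = 0" by (simp add: G_def)
  have dG0: "deriv G 0 = g 0" using d[OF V(3)] by (rule DERIV_imp_deriv)
  have "(\<lambda>z. if z = 0 then deriv G 0 else (G z - G 0) / (z - 0)) holomorphic_on V"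
    by (rule pole_lemma[OF Gh]) (simp add: V interior_open)
  moreover have "(\<lambda>z. if z = 0 then deriv G 0 else (G z - G 0) / (z - 0)) = Hc g"
    unfolding dG0 G0 by (auto simp: fun_eq_iff Hc_def G_def)
  ultimately show ?thesis by simp
qed

lemma hardy_Hc:
  assumes V: "star0 V" "\<And>x::real. complex_of_real x \<in> V" and cont: "continuous_on V g"
  shows "hardy (\<lambda>x. g (complex_of_real x)) x = Hc g (complex_of_real x)"
proof -
  consider "x = 0" | "0 < x" | "x < 0" by linarith
  then show ?thesis
  proof cases
    case 1 then show ?thesis by (simp add: hardy_def Hc_def)
  next
    case 2
    have "contour_integral (linepath 0 (complex_of_real x)) g = integral {Re 0..Re (complex_of_real x)} (\<lambda>x. g (complex_of_real x))"
      by (rule contour_integral_linepath_Reals_eq) (use 2 in auto)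
    then show ?thesis using 2 by (simp add: hardy_def Hc_def)
  next
    case 3
    have seg: "closed_segment 0 (complex_of_real x) \<subseteq> V" using star0_seg[OF V(1) V(2)] .
    have "contour_integral (linepath 0 (complex_of_real x)) g = - contour_integral (linepath (complex_of_real x) 0) g"
      by (rule contour_integral_reverse_linepath, rule continuous_on_subset[OF cont seg])
    also have "contour_integral (linepath (complex_of_real x) 0) g = integral {Re (complex_of_real x)..Re 0} (\<lambda>x. g (complex_of_real x))"
      by (rule contour_integral_linepath_Reals_eq) (use 3 in auto)
    finally have eq: "contour_integral (linepath 0 (complex_of_real x)) g = - integral {x..0} (\<lambda>x. g (complex_of_real x))"
      by (simp del: linepath_0)
    show ?thesis using 3 unfolding hardy_def Hc_def eq by simp
  qed
qed

lemma goodV_open: "goodV V \<Longrightarrow> open V" and goodV_star: "goodV V \<Longrightarrow> star0 V"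
  and goodV_real: "goodV V \<Longrightarrow> complex_of_real x \<in> V"
  by (auto simp: goodV_def)

lemma Hck_holo: "goodV V \<Longrightarrow> g holomorphic_on V \<Longrightarrow> (Hc ^^ k) g holomorphic_on V"
  by (induction k) (auto intro!: Hc_holo simp: goodV_open goodV_star goodV_0)

lemma Hck_bound:
  assumes "goodV V" "g holomorphic_on V" "star0 S" "S \<subseteq> V" "\<And>w. w\<in>S \<Longrightarrow> cmod (g w) \<le> M" "z \<in> S"
  shows "cmod ((Hc ^^ k) g z) \<le> M"
  using assms(6)
proof (induction k arbitrary: z)
  case 0 then show ?case using assms(5) by simp
next
  case (Suc k)
  have "continuous_on S ((Hc ^^ k) g)"
    using Hck_holo[OF assms(1,2)] assms(4) holomorphic_on_imp_continuous_on holomorphic_on_subset by blast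
  then show ?case using Hc_bound[OF assms(3) _ Suc.IH Suc.prems] by simp
qed

lemma Hck_local:
  assumes "star0 S" "\<And>w. w \<in> S \<Longrightarrow> F w = G w" "z \<in> S"
  shows "(Hc ^^ k) F z = (Hc ^^ k) G z"
  using assms(3)
proof (induction k arbitrary: z)
  case 0 then show ?case using assms(2) by simp
next
  case (Suc k)
  then show ?case using Hc_local[OF assms(1) Suc.prems, of "(Hc ^^ k) F" "(Hc ^^ k) G"] by simp
qed

lemma Hck_cmult: "(Hc ^^ k) (\<lambda>w. c * g w) = (\<lambda>z. c * (Hc ^^ k) g z)"
  by (induction k) (simp_all add: Hc_cmult)

lemma Hck_add:
  assumes "goodV V" "g1 holomorphic_on V" "g2 holomorphic_on V" "z \<in> V"
  shows "(Hc ^^ k) (\<lambda>w. g1 w + g2 w) z = (Hc ^^ k) g1 z + (Hc ^^ k) g2 z"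
  using assms(4)
proof (induction k arbitrary: z)
  case 0 then show ?case by simp
next
  case (Suc k)
  have "(Hc ^^ Suc k) (\<lambda>w. g1 w + g2 w) z = Hc (\<lambda>w. (Hc ^^ k) g1 w + (Hc ^^ k) g2 w) z"
    using Hc_local[OF goodV_star[OF assms(1)] Suc.prems, of "(Hc ^^ k) (\<lambda>w. g1 w + g2 w)"] Suc.IH
    by simp
  also have "\<dots> = Hc ((Hc ^^ k) g1) z + Hc ((Hc ^^ k) g2) z"
    by (rule Hc_add[OF goodV_star[OF assms(1)] _ _ Suc.prems])
       (auto intro!: holomorphic_on_imp_continuous_on Hck_holo assms)
  finally show ?case by simp
qed

lemma hardy_k:
  assumes "goodV V" "g holomorphic_on V"
  shows "(hardy ^^ k) (\<lambda>x. g (complex_of_real x)) = (\<lambda>x. (Hc ^^ k) g (complex_of_real x))"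
proof (induction k)
  case 0 then show ?case by simp
next
  case (Suc k)
  have "continuous_on V ((Hc ^^ k) g)"
    using Hck_holo[OF assms] holomorphic_on_imp_continuous_on by blast
  have "(hardy ^^ Suc k) (\<lambda>x. g (complex_of_real x)) = hardy (\<lambda>x. (Hc ^^ k) g (complex_of_real x))"
    using Suc.IH by simp
  also have "\<dots> = (\<lambda>x. Hc ((Hc ^^ k) g) (complex_of_real x))"
    using hardy_Hc[OF goodV_star[OF assms(1)] goodV_real[OF assms(1)] \<open>continuous_on V ((Hc ^^ k) g)\<close>]
    by (simp add: fun_eq_iff)
  finally show ?case by simp
qed

definition Ac :: "nat \<Rightarrow> (nat \<Rightarrow> complex) \<Rightarrow> (complex \<Rightarrow> complex) \<Rightarrow> complex \<Rightarrow> complex" where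
  "Ac K a g = (\<lambda>z. \<Sum>k\<le>K. a k * (Hc ^^ k) g z)"

definition cA :: "nat \<Rightarrow> (nat \<Rightarrow> complex) \<Rightarrow> real" where
  "cA K a = (\<Sum>k\<le>K. cmod (a k))"

lemma cA_nonneg: "0 \<le> cA K a"
  by (simp add: cA_def sum_nonneg)

lemma Ac_holo: "goodV V \<Longrightarrow> g holomorphic_on V \<Longrightarrow> Ac K a g holomorphic_on V"
  unfolding Ac_def by (intro holomorphic_intros Hck_holo[unfolded holomorphic_on_def, rule_format]
     holomorphic_on_sum holomorphic_on_mult holomorphic_on_const Hck_holo) auto

lemma Ac_bound:
  assumes "goodV V" "g holomorphic_on V" "star0 S" "S \<subseteq> V" "\<And>w. w\<in>S \<Longrightarrow> cmod (g w) \<le> M" "z \<in> S"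
  shows "cmod (Ac K a g z) \<le> cA K a * M"
proof -
  have "cmod (Ac K a g z) \<le> (\<Sum>k\<le>K. cmod (a k * (Hc ^^ k) g z))"
    unfolding Ac_def by (rule norm_sum)
  also have "\<dots> \<le> (\<Sum>k\<le>K. cmod (a k) * M)"
    by (intro sum_mono) (auto simp: norm_mult intro!: mult_left_mono Hck_bound[OF assms])
  finally show ?thesis by (simp add: cA_def sum_distrib_right)
qed

lemma Ac_local:
  assumes "star0 S" "\<And>w. w \<in> S \<Longrightarrow> F w = G w" "z \<in> S"
  shows "Ac K a F z = Ac K a G z"
  unfolding Ac_def using Hck_local[OF assms] by simp

lemma Ac_cmult: "Ac K a (\<lambda>w. c * g w) = (\<lambda>z. c * Ac K a g z)"
  by (simp add: Ac_def Hck_cmult sum_distrib_left algebra_simps)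

lemma Ac_add:
  assumes "goodV V" "g1 holomorphic_on V" "g2 holomorphic_on V" "z \<in> V"
  shows "Ac K a (\<lambda>w. g1 w + g2 w) z = Ac K a g1 z + Ac K a g2 z"
  unfolding Ac_def by (simp add: Hck_add[OF assms] distrib_left sum.distrib)

lemma hardy_poly_Ac:
  assumes "goodV V" "g holomorphic_on V"
  shows "hardy_poly K a (\<lambda>x. g (complex_of_real x)) = (\<lambda>x. Ac K a g (complex_of_real x))"
  unfolding hardy_poly_def Ac_def hardy_k[OF assms] by simp

lemma Acn_holo: "goodV V \<Longrightarrow> g holomorphic_on V \<Longrightarrow> (Ac K a ^^ n) g holomorphic_on V"
  by (induction n) (auto intro!: Ac_holo)

lemma Acn_bound:
  assumes "goodV V" "g holomorphic_on V" "star0 S" "S \<subseteq> V" "\<And>w. w\<in>S \<Longrightarrow> cmod (g w) \<le> M" "z \<in> S"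
  shows "cmod ((Ac K a ^^ n) g z) \<le> cA K a ^ n * M"
  using assms(6)
proof (induction n arbitrary: z)
  case 0 then show ?case using assms(5) by simp
next
  case (Suc n)
  have "cmod (Ac K a ((Ac K a ^^ n) g) z) \<le> cA K a * (cA K a ^ n * M)"
    by (rule Ac_bound[OF assms(1) Acn_holo[OF assms(1,2)] assms(3,4) Suc.IH Suc.prems])
  then show ?case by (simp add: mult.assoc)
qed

lemma Acn_local:
  assumes "star0 S" "\<And>w. w \<in> S \<Longrightarrow> F w = G w" "z \<in> S"
  shows "(Ac K a ^^ n) F z = (Ac K a ^^ n) G z"
  using assms(3)
proof (induction n arbitrary: z)
  case 0 then show ?case using assms(2) by simp
next
  case (Suc n)
  then show ?case using Ac_local[OF assms(1) _ Suc.prems, of "(Ac K a ^^ n) F" "(Ac K a ^^ n) G"] by simp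
qed

lemma Acn_cmult: "(Ac K a ^^ n) (\<lambda>w. c * g w) = (\<lambda>z. c * (Ac K a ^^ n) g z)"
  by (induction n) (simp_all add: Ac_cmult)

lemma Acn_add:
  assumes "goodV V" "g1 holomorphic_on V" "g2 holomorphic_on V" "z \<in> V"
  shows "(Ac K a ^^ n) (\<lambda>w. g1 w + g2 w) z = (Ac K a ^^ n) g1 z + (Ac K a ^^ n) g2 z"
  using assms(4)
proof (induction n arbitrary: z)
  case 0 then show ?case by simp
next
  case (Suc n)
  have "(Ac K a ^^ Suc n) (\<lambda>w. g1 w + g2 w) z = Ac K a (\<lambda>w. (Ac K a ^^ n) g1 w + (Ac K a ^^ n) g2 w) z"
    using Ac_local[OF goodV_star[OF assms(1)] _ Suc.prems, of "(Ac K a ^^ n) (\<lambda>w. g1 w + g2 w)"] Suc.IH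
    by simp
  also have "\<dots> = Ac K a ((Ac K a ^^ n) g1) z + Ac K a ((Ac K a ^^ n) g2) z"
    by (rule Ac_add[OF assms(1) _ _ Suc.prems]) (auto intro!: Acn_holo assms)
  finally show ?case by simp
qed

lemma hardy_poly_n:
  assumes "goodV V" "g holomorphic_on V"
  shows "(hardy_poly K a ^^ n) (\<lambda>x. g (complex_of_real x)) = (\<lambda>x. (Ac K a ^^ n) g (complex_of_real x))"
proof (induction n)
  case 0 then show ?case by simp
next
  case (Suc n)
  then show ?case using hardy_poly_Ac[OF assms(1) Acn_holo[OF assms]] by simp
qed


lemma norm_suminf_le_bound:
  fixes f :: "nat \<Rightarrow> 'a::banach"
  assumes "summable g" "\<And>n. norm (f n) \<le> g n"
  shows "summable (\<lambda>n. norm (f n))" "summable f" "norm (suminf f) \<le> suminf g"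
proof -
  show s: "summable (\<lambda>n. norm (f n))"
    by (rule summable_comparison_test[OF _ assms(1)]) (use assms(2) in auto)
  then show "summable f" by (rule summable_norm_cancel)
  have "norm (suminf f) \<le> (\<Sum>n. norm (f n))" by (rule summable_norm[OF s])
  also have "\<dots> \<le> suminf g" by (rule suminf_le[OF assms(2) s assms(1)])
  finally show "norm (suminf f) \<le> suminf g" .
qed

lemma exp_sums_real: "(\<lambda>n. (x::real)^n / fact n) sums exp x"
  using exp_converges[of x] by (simp add: divide_inverse mult.commute)

lemma expM_sums: "(\<lambda>n. (x::real)^n / fact n * M) sums (exp x * M)"
  using sums_mult2[OF exp_sums_real] .

lemma fact_le_Suc: "(fact n :: real) \<le> fact (Suc n)"
  by (rule fact_mono) simp

context
  fixes u :: "nat \<Rightarrow> complex" and c M :: real and t :: complex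
  assumes ub: "\<And>n. cmod (u n) \<le> c^n * M" and c0: "0 \<le> c"
begin

lemma M0: "0 \<le> M"
  using ub[of 0] by simp (meson norm_ge_zero order_trans)

lemma term_bound: "cmod (t^n / fact n * u n) \<le> (cmod t * c)^n / fact n * M"
proof -
  have "cmod (t^n / fact n * u n) = cmod t ^ n / fact n * cmod (u n)"
    by (simp add: norm_mult norm_divide norm_power)
  also have "\<dots> \<le> cmod t ^ n / fact n * (c^n * M)"
    by (intro mult_left_mono ub) auto
  finally show ?thesis by (simp add: power_mult_distrib)
qed

lemma ser_summable: "summable (\<lambda>n. t^n / fact n * u n)"
  and ser_norm_summable: "summable (\<lambda>n. cmod (t^n / fact n * u n))"
  and ser_bound: "cmod (\<Sum>n. t^n / fact n * u n) \<le> exp (cmod t * c) * M"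
proof -
  note s = expM_sums[of "cmod t * c" M]
  show "summable (\<lambda>n. t^n / fact n * u n)" "summable (\<lambda>n. cmod (t^n / fact n * u n))"
    using norm_suminf_le_bound[OF sums_summable[OF s] term_bound] by auto
  show "cmod (\<Sum>n. t^n / fact n * u n) \<le> exp (cmod t * c) * M"
    using norm_suminf_le_bound(3)[OF sums_summable[OF s] term_bound] s by (simp add: sums_iff)
qed

lemma ser_bound1: "cmod ((\<Sum>n. t^n / fact n * u n) - u 0) \<le> cmod t * c * exp (cmod t * c) * M"
proof -
  define x where "x = cmod t * c"
  have x0: "0 \<le> x" using c0 by (simp add: x_def)
  have eq: "(\<Sum>n. t^n / fact n * u n) - u 0 = (\<Sum>n. t^Suc n / fact (Suc n) * u (Suc n))"
    using suminf_split_head[OF ser_summable] by simp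
  have s: "(\<lambda>n. x * (x^n / fact n * M)) sums (x * (exp x * M))"
    by (rule sums_mult[OF expM_sums])
  have b: "cmod (t^Suc n / fact (Suc n) * u (Suc n)) \<le> x * (x^n / fact n * M)" for n
  proof -
    have "cmod (t^Suc n / fact (Suc n) * u (Suc n)) \<le> x^Suc n / fact (Suc n) * M"
      using term_bound unfolding x_def .
    also have "\<dots> \<le> x^Suc n / fact n * M"
      by (intro mult_right_mono divide_left_mono fact_le_Suc) (auto simp: x0 M0)
    finally show ?thesis by simp
  qed
  show ?thesis
    using norm_suminf_le_bound(3)[OF sums_summable[OF s] b] s unfolding eq
    by (simp add: sums_iff x_def mult.assoc)
qed

lemma ser_bound2:
  assumes "t \<noteq> 0"
  shows "cmod (((\<Sum>n. t^n / fact n * u n) - u 0) / t - u 1) \<le> cmod t * c^2 * exp (cmod t * c) * M"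
proof -
  define x where "x = cmod t * c"
  have x0: "0 \<le> x" using c0 by (simp add: x_def)
  have "(\<Sum>n. t^n / fact n * u n) = (\<Sum>n. t^(n+2) / fact (n+2) * u (n+2)) + (\<Sum>i<2. t^i / fact i * u i)"
    by (rule suminf_split_initial_segment[OF ser_summable])
  also have "(\<Sum>i<2. t^i / fact i * u i) = u 0 + t * u 1"
    by (simp add: numeral_2_eq_2)
  finally have "((\<Sum>n. t^n / fact n * u n) - u 0) / t - u 1 = (\<Sum>n. t^(n+2) / fact (n+2) * u (n+2)) / t"
    using assms by (simp add: field_simps)
  also have "\<dots> = (\<Sum>n. t^(n+2) / fact (n+2) * u (n+2) / t)"
    by (rule suminf_divide[symmetric], rule summable_ignore_initial_segment[OF ser_summable])
  finally have eq: "((\<Sum>n. t^n / fact n * u n) - u 0) / t - u 1 = (\<Sum>n. t^(n+2) / fact (n+2) * u (n+2) / t)" .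
  have s: "(\<lambda>n. (cmod t * c^2) * (x^n / fact n * M)) sums ((cmod t * c^2) * (exp x * M))"
    by (rule sums_mult[OF expM_sums])
  have b: "cmod (t^(n+2) / fact (n+2) * u (n+2) / t) \<le> (cmod t * c^2) * (x^n / fact n * M)" for n
  proof -
    have f: "(fact n :: real) \<le> fact (n+2)" by (rule fact_mono) simp
    have "cmod (t^(n+2) / fact (n+2) * u (n+2) / t) = cmod (t^(n+2) / fact (n+2) * u (n+2)) / cmod t"
      by (rule norm_divide)
    also have "\<dots> \<le> (x^(n+2) / fact (n+2) * M) / cmod t"
      by (rule divide_right_mono) (use term_bound[of "n+2"] in \<open>auto simp: x_def\<close>)
    also have "\<dots> \<le> (x^(n+2) / fact n * M) / cmod t"
      by (intro divide_right_mono mult_right_mono divide_left_mono f) (auto simp: x0 M0)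
    also have "\<dots> = (cmod t * c^2) * (x^n / fact n * M)"
      using assms by (simp add: x_def field_simps power_add power_mult_distrib power2_eq_square)
    finally show ?thesis .
  qed
  show ?thesis
    using norm_suminf_le_bound(3)[OF sums_summable[OF s] b] s unfolding eq
    by (simp add: sums_iff x_def mult.assoc)
qed

end


lemma star0_I:
  assumes "\<And>z u. z \<in> S \<Longrightarrow> 0 \<le> u \<Longrightarrow> u \<le> 1 \<Longrightarrow> complex_of_real u * z \<in> S"
  shows "star0 S"
  unfolding star0_def
proof (intro ballI subsetI)
  fix z y assume "z \<in> S" "y \<in> closed_segment 0 z"
  then obtain u where "0 \<le> u" "u \<le> 1" "y = u *\<^sub>R z" by (auto simp: in_segment)
  then show "y \<in> S" using assms[OF \<open>z \<in> S\<close>] by (simp add: scaleR_conv_of_real)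
qed

lemma star0_D:
  assumes "star0 S" "z \<in> S" "0 \<le> u" "u \<le> 1"
  shows "complex_of_real u * z \<in> S"
proof -
  have "u *\<^sub>R z \<in> closed_segment 0 z" using assms(3,4) by (auto simp: in_segment)
  then show ?thesis using star0_seg[OF assms(1,2)] by (auto simp: scaleR_conv_of_real)
qed

lemma star_hull:
  assumes "compact K" "K \<subseteq> V" "star0 V" "0 \<in> V"
  shows "\<exists>S. compact S \<and> K \<subseteq> S \<and> S \<subseteq> V \<and> star0 S \<and> 0 \<in> S"
proof -
  define S where "S = (\<lambda>p. complex_of_real (fst p) * snd p) ` ({0..1} \<times> insert 0 K)"
  have "compact S" unfolding S_def
    by (intro compact_continuous_image continuous_intros compact_Times compact_insert assms) auto
  moreover have "K \<subseteq> S" unfolding S_def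
  proof
    fix z assume "z \<in> K" then show "z \<in> (\<lambda>p. complex_of_real (fst p) * snd p) ` ({0..1} \<times> insert 0 K)"
      by (intro image_eqI[of _ _ "(1, z)"]) auto
  qed
  moreover have "S \<subseteq> V" unfolding S_def using assms(2,4) by (auto intro!: star0_D[OF assms(3)])
  moreover have "star0 S"
  proof (rule star0_I)
    fix z u assume "z \<in> S" "0 \<le> u" "u \<le> (1::real)"
    then obtain p where p: "p \<in> {0..1} \<times> insert 0 K" "z = complex_of_real (fst p) * snd p"
      unfolding S_def by blast
    then show "complex_of_real u * z \<in> S" unfolding S_def using \<open>0 \<le> u\<close> \<open>u \<le> 1\<close>
      by (intro image_eqI[of _ _ "(u * fst p, snd p)"]) (auto simp: mult_le_one mult.assoc)
  qed
  moreover have "0 \<in> S" unfolding S_def by (intro image_eqI[of _ _ "(0, 0)"]) auto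
  ultimately show ?thesis by blast
qed

lemma goodV_sub:
  assumes "open U" "\<And>x::real. complex_of_real x \<in> U"
  shows "\<exists>V. goodV V \<and> V \<subseteq> U"
proof -
  have "\<exists>e>0. \<forall>x::real. \<bar>x\<bar> \<le> real n \<longrightarrow> ball (complex_of_real x) e \<subseteq> U" for n :: nat
  proof -
    have "compact (complex_of_real ` {- real n..real n})"
      by (intro compact_continuous_image continuous_intros) auto
    moreover have "complex_of_real ` {- real n..real n} \<subseteq> U" using assms(2) by auto
    ultimately obtain e where "e > 0" "(\<Union>x\<in>complex_of_real ` {- real n..real n}. ball x e) \<subseteq> U"
      using compact_subset_open_imp_ball_epsilon_subset assms(1) by metis
    then have "ball (complex_of_real x) e \<subseteq> U" if "\<bar>x\<bar> \<le> real n" for x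
    proof -
      have "x \<in> {- real n..real n}" using that by auto
      then show ?thesis using \<open>(\<Union>x\<in>complex_of_real ` {- real n..real n}. ball x e) \<subseteq> U\<close> by blast
    qed
    then show ?thesis using \<open>e > 0\<close> by blast
  qed
  then obtain e where e: "\<And>n. e n > 0" "\<And>n x. \<bar>x\<bar> \<le> real n \<Longrightarrow> ball (complex_of_real x) (e n) \<subseteq> U"
    by metis
  define R where "R n = {z. \<bar>Re z\<bar> < real n \<and> \<bar>Im z\<bar> < e n}" for n
  define V where "V = (\<Union>n. R n)"
  have "open (R n)" for n unfolding R_def
    by (intro open_Collect_conj open_Collect_less continuous_intros)
  then have "open V" unfolding V_def by auto
  moreover have "star0 V"
  proof (rule star0_I)
    fix z u assume "z \<in> V" "0 \<le> u" "u \<le> (1::real)"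
    then obtain n where n: "\<bar>Re z\<bar> < real n" "\<bar>Im z\<bar> < e n" unfolding V_def R_def by auto
    have "\<bar>u * Re z\<bar> \<le> \<bar>Re z\<bar>" "\<bar>u * Im z\<bar> \<le> \<bar>Im z\<bar>"
      using \<open>0 \<le> u\<close> \<open>u \<le> 1\<close> by (auto simp: abs_mult mult_left_le_one_le)
    then have "\<bar>Re (complex_of_real u * z)\<bar> < real n" "\<bar>Im (complex_of_real u * z)\<bar> < e n" using n by auto
    then show "complex_of_real u * z \<in> V" unfolding V_def R_def by blast
  qed
  moreover have "complex_of_real x \<in> V" for x
  proof -
    obtain n :: nat where "\<bar>x\<bar> < real n" using reals_Archimedean2 by blast
    then show ?thesis unfolding V_def R_def using e(1)[of n] by auto
  qed
  moreover have "V \<subseteq> U"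
  proof
    fix z assume "z \<in> V"
    then obtain n where n: "\<bar>Re z\<bar> < real n" "\<bar>Im z\<bar> < e n" unfolding V_def R_def by auto
    have "dist (complex_of_real (Re z)) z = \<bar>Im z\<bar>"
      by (simp add: dist_norm cmod_def complex_of_real_def)
    then have "z \<in> ball (complex_of_real (Re z)) (e n)" using n by simp
    then show "z \<in> U" using e(2)[of "Re z" n] n by auto
  qed
  ultimately show ?thesis unfolding goodV_def by blast
qed

lemma goodV_Int: "goodV V1 \<Longrightarrow> goodV V2 \<Longrightarrow> goodV (V1 \<inter> V2)"
  unfolding goodV_def star0_def by auto

lemma realfns_goodV:
  assumes "f \<in> real_analytic_fns"
  shows "\<exists>V g. goodV V \<and> g holomorphic_on V \<and> f = (\<lambda>x. g (complex_of_real x))"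
proof -
  obtain U g where "open U" "\<forall>x::real. complex_of_real x \<in> U" "g holomorphic_on U" "\<forall>x. f x = g (complex_of_real x)"
    using assms unfolding real_analytic_fns_def by blast
  moreover obtain V where "goodV V" "V \<subseteq> U" using goodV_sub calculation by metis
  ultimately show ?thesis by (intro exI[of _ V] exI[of _ g]) (auto intro: holomorphic_on_subset)
qed

lemma goodV_realfns: "goodV V \<Longrightarrow> g holomorphic_on V \<Longrightarrow> (\<lambda>x. g (complex_of_real x)) \<in> real_analytic_fns"
  unfolding real_analytic_fns_def goodV_def by blast


definition Ec :: "nat \<Rightarrow> (nat \<Rightarrow> complex) \<Rightarrow> complex \<Rightarrow> (complex \<Rightarrow> complex) \<Rightarrow> complex \<Rightarrow> complex" where
  "Ec K a t g z = (\<Sum>n. t^n / fact n * (Ac K a ^^ n) g z)"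

lemma compact_bound:
  assumes "compact S" "continuous_on S g"
  shows "\<exists>M. \<forall>z\<in>S. cmod (g z) \<le> M"
proof -
  have "bounded (g ` S)" by (rule compact_imp_bounded[OF compact_continuous_image[OF assms(2,1)]])
  then show ?thesis unfolding bounded_iff by auto
qed

context
  fixes K :: nat and a :: "nat \<Rightarrow> complex" and V g S and M :: real
  assumes V: "goodV V" and hol: "g holomorphic_on V" and S: "star0 S" "S \<subseteq> V"
    and Mb: "\<And>w. w \<in> S \<Longrightarrow> cmod (g w) \<le> M"
begin

lemma Acn_ub: "z \<in> S \<Longrightarrow> cmod ((Ac K a ^^ n) g z) \<le> cA K a ^ n * M"
  by (rule Acn_bound[OF V hol S Mb])

lemma Ec_summable: "z \<in> S \<Longrightarrow> summable (\<lambda>n. t^n / fact n * (Ac K a ^^ n) g z)"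
  by (rule ser_summable[OF Acn_ub cA_nonneg])

lemma Ec_bound: "z \<in> S \<Longrightarrow> cmod (Ec K a t g z) \<le> exp (cmod t * cA K a) * M"
  unfolding Ec_def by (rule ser_bound[OF Acn_ub cA_nonneg])

lemma Ec_bound1: "z \<in> S \<Longrightarrow> cmod (Ec K a t g z - g z) \<le> cmod t * cA K a * exp (cmod t * cA K a) * M"
  unfolding Ec_def using ser_bound1[OF Acn_ub cA_nonneg] by simp

lemma Ec_bound2: "z \<in> S \<Longrightarrow> t \<noteq> 0 \<Longrightarrow>
   cmod ((Ec K a t g z - g z) / t - Ac K a g z) \<le> cmod t * (cA K a)^2 * exp (cmod t * cA K a) * M"
  unfolding Ec_def using ser_bound2[OF Acn_ub cA_nonneg] by simp

end

lemma goodV_summable: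
  assumes V: "goodV V" and hol: "g holomorphic_on V" and z: "z \<in> V"
  shows "summable (\<lambda>n. t^n / fact n * (Ac K a ^^ n) g z)"
proof -
  obtain S where S: "compact S" "{z} \<subseteq> S" "S \<subseteq> V" "star0 S" "0 \<in> S"
    using star_hull[of "{z}" V] z goodV_star[OF V] goodV_0[OF V] by auto
  obtain M where M: "\<forall>w\<in>S. cmod (g w) \<le> M"
    using compact_bound[OF S(1)] holomorphic_on_imp_continuous_on[OF holomorphic_on_subset[OF hol S(3)]] by blast
  show ?thesis by (rule Ec_summable[OF V hol S(4,3)]) (use M S(2) in auto)
qed

lemma Ec_holo:
  assumes V: "goodV V" and hol: "g holomorphic_on V"
  shows "Ec K a t g holomorphic_on V"
proof (rule holomorphic_uniform_sequence[where f = "\<lambda>n z. \<Sum>i<n. t^i / fact i * (Ac K a ^^ i) g z"])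
  show "open V" using goodV_open[OF V] .
  show "(\<lambda>z. \<Sum>i<n. t^i / fact i * (Ac K a ^^ i) g z) holomorphic_on V" for n
    by (intro holomorphic_on_sum holomorphic_on_mult holomorphic_on_const Acn_holo[OF V hol])
  fix x assume x: "x \<in> V"
  obtain d where d: "d > 0" "cball x d \<subseteq> V"
    using goodV_open[OF V] x open_contains_cball by blast
  obtain S where S: "compact S" "cball x d \<subseteq> S" "S \<subseteq> V" "star0 S" "0 \<in> S"
    using star_hull[of "cball x d" V] d goodV_star[OF V] goodV_0[OF V] by auto
  obtain M where M: "\<forall>w\<in>S. cmod (g w) \<le> M"
    using compact_bound[OF S(1)] holomorphic_on_imp_continuous_on[OF holomorphic_on_subset[OF hol S(3)]] by blast
  have "uniform_limit (cball x d) (\<lambda>n z. \<Sum>i<n. t^i / fact i * (Ac K a ^^ i) g z)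
          (\<lambda>z. \<Sum>i. t^i / fact i * (Ac K a ^^ i) g z) sequentially"
  proof (rule Weierstrass_m_test)
    show "summable (\<lambda>n. (cmod t * cA K a)^n / fact n * M)"
      using expM_sums by (rule sums_summable)
    fix n w assume "w \<in> cball x d"
    then have "w \<in> S" using S(2) by auto
    have ub: "cmod ((Ac K a ^^ k) g w) \<le> cA K a ^ k * M" for k
      by (rule Acn_bound[OF V hol S(4,3)]) (use M \<open>w \<in> S\<close> in auto)
    show "cmod (t^n / fact n * (Ac K a ^^ n) g w) \<le> (cmod t * cA K a)^n / fact n * M"
      by (rule term_bound[OF ub cA_nonneg])
  qed
  then show "\<exists>d>0. cball x d \<subseteq> V \<and> uniform_limit (cball x d) (\<lambda>n z. \<Sum>i<n. t^i / fact i * (Ac K a ^^ i) g z) (Ec K a t g) sequentially"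
    using d unfolding Ec_def by blast
qed

lemma Ec_cmult:
  assumes V: "goodV V" and hol: "g holomorphic_on V" and z: "z \<in> V"
  shows "Ec K a t (\<lambda>w. c * g w) z = c * Ec K a t g z"
  unfolding Ec_def Acn_cmult
  using suminf_mult[OF goodV_summable[OF V hol z, of t K a], of c] by (simp add: algebra_simps)

lemma Ec_add:
  assumes V: "goodV V" and hol: "g1 holomorphic_on V" "g2 holomorphic_on V" and z: "z \<in> V"
  shows "Ec K a t (\<lambda>w. g1 w + g2 w) z = Ec K a t g1 z + Ec K a t g2 z"
  unfolding Ec_def Acn_add[OF V hol z]
  using suminf_add[OF goodV_summable[OF V hol(1) z, of t K a] goodV_summable[OF V hol(2) z, of t K a]]
  by (simp add: algebra_simps)

lemma Hc_suminf:
  assumes S: "star0 S" and cont: "\<And>m. continuous_on S (h m)"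
    and B: "\<And>m w. w \<in> S \<Longrightarrow> cmod (h m w) \<le> B m" "summable B" and z: "z \<in> S"
  shows "Hc (\<lambda>w. \<Sum>m. h m w) z = (\<Sum>m. Hc (h m) z)"
proof (cases "z = 0")
  case True then show ?thesis by (simp add: Hc_def)
next
  case False
  have seg: "closed_segment 0 z \<subseteq> S" using star0_seg[OF S z] .
  have "uniform_limit S (\<lambda>N w. \<Sum>n<N. h n w) (\<lambda>w. \<Sum>m. h m w) sequentially"
    by (rule Weierstrass_m_test[OF B])
  then have u: "uniform_limit (closed_segment 0 z) (\<lambda>N w. \<Sum>n<N. h n w) (\<lambda>w. \<Sum>m. h m w) sequentially"
    by (rule uniform_limit_on_subset[OF _ seg])
  obtain J where J: "((\<lambda>w. \<Sum>m. h m w) has_contour_integral J) (linepath 0 z)"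
     "(\<lambda>n. contour_integral (linepath 0 z) (h n)) sums J"
    using contour_integral_sums_linepath[OF u continuous_on_subset[OF cont seg]] by blast
  have "Hc (\<lambda>w. \<Sum>m. h m w) z = J / z"
    using False J(1) by (simp add: Hc_def contour_integral_unique)
  also have "\<dots> = (\<Sum>m. contour_integral (linepath 0 z) (h m) / z)"
    using sums_divide[OF J(2), of z] by (simp add: sums_iff)
  also have "\<dots> = (\<Sum>m. Hc (h m) z)"
    using False by (simp add: Hc_def)
  finally show ?thesis .
qed

context
  fixes V S and h :: "nat \<Rightarrow> complex \<Rightarrow> complex" and B :: "nat \<Rightarrow> real"
  assumes V: "goodV V" and hol: "\<And>m. h m holomorphic_on V" and S: "star0 S" "S \<subseteq> V"
    and B: "\<And>m w. w \<in> S \<Longrightarrow> cmod (h m w) \<le> B m" "summable B"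
begin

lemma Hck_suminf: "z \<in> S \<Longrightarrow> (Hc ^^ k) (\<lambda>w. \<Sum>m. h m w) z = (\<Sum>m. (Hc ^^ k) (h m) z)"
proof (induction k arbitrary: z)
  case 0 then show ?case by simp
next
  case (Suc k)
  have "(Hc ^^ Suc k) (\<lambda>w. \<Sum>m. h m w) z = Hc (\<lambda>w. \<Sum>m. (Hc ^^ k) (h m) w) z"
    using Hc_local[OF S(1) Suc.prems, of "(Hc ^^ k) (\<lambda>w. \<Sum>m. h m w)"] Suc.IH by simp
  also have "\<dots> = (\<Sum>m. Hc ((Hc ^^ k) (h m)) z)"
  proof (rule Hc_suminf[OF S(1) _ _ B(2) Suc.prems])
    show "continuous_on S ((Hc ^^ k) (h m))" for m
      using Hck_holo[OF V hol] S(2) holomorphic_on_imp_continuous_on holomorphic_on_subset by blast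
    show "cmod ((Hc ^^ k) (h m) w) \<le> B m" if "w \<in> S" for m w
      by (rule Hck_bound[OF V hol S B(1) that])
  qed
  finally show ?case by simp
qed

lemma Ac_suminf: "z \<in> S \<Longrightarrow> Ac K a (\<lambda>w. \<Sum>m. h m w) z = (\<Sum>m. Ac K a (h m) z)"
proof -
  assume z: "z \<in> S"
  have sm: "summable (\<lambda>m. (Hc ^^ k) (h m) z)" for k
    using norm_suminf_le_bound(2)[OF B(2) Hck_bound[OF V hol S B(1) z]] .
  have "Ac K a (\<lambda>w. \<Sum>m. h m w) z = (\<Sum>k\<le>K. a k * (\<Sum>m. (Hc ^^ k) (h m) z))"
    unfolding Ac_def using Hck_suminf[OF z] by simp
  also have "\<dots> = (\<Sum>k\<le>K. \<Sum>m. a k * (Hc ^^ k) (h m) z)"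
    using suminf_mult[OF sm] by simp
  also have "\<dots> = (\<Sum>m. \<Sum>k\<le>K. a k * (Hc ^^ k) (h m) z)"
    by (rule suminf_sum[symmetric]) (intro summable_mult sm)
  finally show ?thesis unfolding Ac_def by simp
qed

end

lemma Acn_suminf:
  assumes V: "goodV V" and hol: "\<And>m. h m holomorphic_on V" and S: "star0 S" "S \<subseteq> V"
    and B: "\<And>m w. w \<in> S \<Longrightarrow> cmod (h m w) \<le> B m" "summable B" and z: "z \<in> S"
  shows "(Ac K a ^^ n) (\<lambda>w. \<Sum>m. h m w) z = (\<Sum>m. (Ac K a ^^ n) (h m) z)"
  using z
proof (induction n arbitrary: z)
  case 0 then show ?case by simp
next
  case (Suc n)
  have "(Ac K a ^^ Suc n) (\<lambda>w. \<Sum>m. h m w) z = Ac K a (\<lambda>w. \<Sum>m. (Ac K a ^^ n) (h m) w) z"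
    using Ac_local[OF S(1) _ Suc.prems, of "(Ac K a ^^ n) (\<lambda>w. \<Sum>m. h m w)"] Suc.IH by simp
  also have "\<dots> = (\<Sum>m. Ac K a ((Ac K a ^^ n) (h m)) z)"
  proof (rule Ac_suminf[OF V _ S _ _ Suc.prems])
    show "(Ac K a ^^ n) (h m) holomorphic_on V" for m by (rule Acn_holo[OF V hol])
    show "cmod ((Ac K a ^^ n) (h m) w) \<le> cA K a ^ n * B m" if "w \<in> S" for m w
      by (rule Acn_bound[OF V hol S B(1) that])
    show "summable (\<lambda>m. cA K a ^ n * B m)" by (intro summable_mult B(2))
  qed
  finally show ?case by simp
qed


lemma infsum_eq_suminf_nat:
  fixes f :: "nat \<Rightarrow> 'a::banach"
  assumes "summable (\<lambda>n. norm (f n))"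
  shows "infsum f UNIV = suminf f"
proof -
  have "f sums suminf f" using summable_norm_cancel[OF assms] by (rule summable_sums)
  then show ?thesis by (intro infsumI norm_summable_imp_has_sum[OF assms])
qed

lemma double_exp:
  fixes v :: "nat \<Rightarrow> complex" and c M :: real and t s :: complex
  assumes ub: "\<And>N. cmod (v N) \<le> c^N * M" and c0: "0 \<le> c"
  shows "(\<Sum>n. t^n / fact n * (\<Sum>m. s^m / fact m * v (n+m))) = (\<Sum>N. (t+s)^N / fact N * v N)"
proof -
  have M0: "0 \<le> M" using M0[OF ub c0] .
  define F where "F p = t^(fst p) / fact (fst p) * (s^(snd p) / fact (snd p) * v (fst p + snd p))" for p
  define G where "G p = (cmod t * c)^(fst p) / fact (fst p) * ((cmod s * c)^(snd p) / fact (snd p) * M)" for p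
  have FG: "norm (F p) \<le> G p" for p
  proof -
    obtain n m where p: "p = (n, m)" by (cases p)
    have "norm (F p) = cmod t ^ n / fact n * (cmod s ^ m / fact m * cmod (v (n+m)))"
      by (simp add: F_def p norm_mult norm_divide norm_power)
    also have "\<dots> \<le> cmod t ^ n / fact n * (cmod s ^ m / fact m * (c^(n+m) * M))"
      by (intro mult_left_mono ub) auto
    also have "\<dots> = G p" by (simp add: G_def p power_add power_mult_distrib)
    finally show ?thesis .
  qed
  have G0: "0 \<le> G p" for p using c0 M0 by (simp add: G_def)
  have ssum: "(\<lambda>m. G (n, m)) sums ((cmod t * c)^n / fact n * (exp (cmod s * c) * M))" for n
    unfolding G_def fst_conv snd_conv by (rule sums_mult[OF expM_sums])
  have hs: "((\<lambda>m. G (n, m)) has_sum ((cmod t * c)^n / fact n * (exp (cmod s * c) * M))) UNIV" for n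
    by (rule sums_nonneg_imp_has_sum[OF ssum G0])
  have gs: "(\<lambda>n. (cmod t * c)^n / fact n * (exp (cmod s * c) * M)) summable_on UNIV"
    unfolding summable_on_def
    by (rule exI, rule sums_nonneg_imp_has_sum[OF expM_sums]) (use c0 M0 in simp)
  have "G summable_on Sigma UNIV (\<lambda>_. UNIV)"
    by (rule summable_on_SigmaI[OF hs gs G0])
  then have Gs: "G summable_on UNIV" by simp
  have "(\<lambda>p. norm (F p)) summable_on UNIV"
    by (rule summable_on_comparison_test[OF Gs FG]) simp
  then have Fs: "F summable_on UNIV" by (rule abs_summable_summable)
  define w where "w n = (\<Sum>m. s^m / fact m * v (n+m))" for n
  have wub: "cmod (v (n+m)) \<le> c^m * (c^n * M)" for n m
    using ub[of "n+m"] by (simp add: power_add mult_ac)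
  have wb: "cmod (w n) \<le> c^n * (exp (cmod s * c) * M)" for n
  proof -
    have "cmod (w n) \<le> exp (cmod s * c) * (c^n * M)"
      unfolding w_def by (rule ser_bound[where u="\<lambda>m. v (n+m)"]) (use wub c0 in auto)
    then show ?thesis by (simp add: mult_ac)
  qed
  have wsn: "summable (\<lambda>m. cmod (s^m / fact m * v (n+m)))" for n
    by (rule ser_norm_summable[where u="\<lambda>m. v (n+m)" and M="c^n*M"]) (use wub c0 in auto)
  have wsm: "summable (\<lambda>m. s^m / fact m * v (n+m))" for n
    by (rule ser_summable[where u="\<lambda>m. v (n+m)" and M="c^n*M"]) (use wub c0 in auto)
  have inner: "infsum (\<lambda>m. F (n, m)) UNIV = t^n / fact n * w n" for n
  proof -
    have "summable (\<lambda>m. norm (t^n / fact n * (s^m / fact m * v (n+m))))"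
      using summable_mult[OF wsn[of n], of "cmod (t^n / fact n)"]
      by (simp only: norm_mult)
    then have "infsum (\<lambda>m. F (n, m)) UNIV = (\<Sum>m. t^n / fact n * (s^m / fact m * v (n+m)))"
      unfolding F_def fst_conv snd_conv by (rule infsum_eq_suminf_nat)
    also have "\<dots> = t^n / fact n * w n"
      unfolding w_def by (rule suminf_mult[OF wsm])
    finally show ?thesis .
  qed
  have "infsum F UNIV = infsum F (Sigma UNIV (\<lambda>_. UNIV))" by simp
  also have "\<dots> = infsum (\<lambda>n. infsum (\<lambda>m. F (n, m)) UNIV) UNIV"
    by (rule infsum_Sigma_banach[symmetric]) (use Fs in simp)
  also have "\<dots> = infsum (\<lambda>n. t^n / fact n * w n) UNIV" by (simp add: inner)
  also have "\<dots> = (\<Sum>n. t^n / fact n * w n)"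
    by (rule infsum_eq_suminf_nat[OF ser_norm_summable[OF wb c0]])
  finally have L: "infsum F UNIV = (\<Sum>n. t^n / fact n * w n)" .
  define \<phi> where "\<phi> q = (snd q, fst q - snd q)" for q :: "nat \<times> nat"
  have bij: "bij_betw \<phi> (Sigma UNIV (\<lambda>N. {..N})) UNIV"
    by (rule bij_betw_byWitness[where f' = "\<lambda>p. (fst p + snd p, fst p)"]) (auto simp: \<phi>_def)
  have trm: "(t+s)^N / fact N * v N = (\<Sum>i\<le>N. F (\<phi> (N, i)))" for N
  proof -
    have "(t+s)^N / fact N = (\<Sum>i\<le>N. of_nat (N choose i) * t^i * s^(N-i) / fact N)"
      by (simp add: binomial_ring sum_divide_distrib)
    also have "\<dots> = (\<Sum>i\<le>N. t^i / fact i * (s^(N-i) / fact (N-i)))"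
    proof (rule sum.cong[OF refl])
      fix i assume "i \<in> {..N}"
      then have "(of_nat (N choose i) :: complex) = fact N / (fact i * fact (N - i))"
        by (intro binomial_fact) auto
      then show "of_nat (N choose i) * t^i * s^(N-i) / fact N = t^i / fact i * (s^(N-i) / fact (N-i))"
        by (simp add: field_simps)
    qed
    finally show ?thesis
      by (simp add: F_def \<phi>_def sum_distrib_left mult_ac)
  qed
  have "infsum F UNIV = infsum (\<lambda>q. F (\<phi> q)) (Sigma UNIV (\<lambda>N. {..N}))"
    by (rule infsum_reindex_bij_betw[OF bij, symmetric])
  also have "\<dots> = infsum (\<lambda>N. infsum (\<lambda>i. F (\<phi> (N, i))) {..N}) UNIV"
  proof (rule infsum_Sigma_banach[symmetric])
    show "(\<lambda>q. F (\<phi> q)) summable_on Sigma UNIV (\<lambda>N. {..N})"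
      using summable_on_reindex_bij_betw[OF bij, of F] Fs by blast
  qed
  also have "\<dots> = infsum (\<lambda>N. (t+s)^N / fact N * v N) UNIV"
    by (rule infsum_cong) (simp only: trm infsum_finite finite_atMost)
  also have "\<dots> = (\<Sum>N. (t+s)^N / fact N * v N)"
    by (rule infsum_eq_suminf_nat[OF ser_norm_summable[OF ub c0]])
  finally show ?thesis using L unfolding w_def by simp
qed


lemma Ec_group:
  assumes V: "goodV V" and hol: "g holomorphic_on V" and z: "z \<in> V"
  shows "Ec K a t (Ec K a s g) z = Ec K a (t+s) g z"
proof -
  obtain S where S: "compact S" "{z} \<subseteq> S" "S \<subseteq> V" "star0 S" "0 \<in> S"
    using star_hull[of "{z}" V] z goodV_star[OF V] goodV_0[OF V] by auto
  obtain M where M: "\<forall>w\<in>S. cmod (g w) \<le> M"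
    using compact_bound[OF S(1)] holomorphic_on_imp_continuous_on[OF holomorphic_on_subset[OF hol S(3)]] by blast
  have ub: "w \<in> S \<Longrightarrow> cmod ((Ac K a ^^ n) g w) \<le> cA K a ^ n * M" for n w
    by (rule Acn_bound[OF V hol S(4,3)]) (use M in auto)
  define h where "h m = (\<lambda>w. s^m / fact m * (Ac K a ^^ m) g w)" for m
  have hh: "h m holomorphic_on V" for m
    unfolding h_def by (intro holomorphic_on_mult holomorphic_on_const Acn_holo[OF V hol])
  have hb: "w \<in> S \<Longrightarrow> cmod (h m w) \<le> (cmod s * cA K a)^m / fact m * M" for m w
    unfolding h_def by (rule term_bound[OF ub cA_nonneg])
  have Bs: "summable (\<lambda>m. (cmod s * cA K a)^m / fact m * M)"
    by (rule sums_summable[OF expM_sums])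
  have Es: "Ec K a s g = (\<lambda>w. \<Sum>m. h m w)" by (simp add: Ec_def h_def fun_eq_iff)
  have zS: "z \<in> S" using S(2) by auto
  have "Ec K a t (Ec K a s g) z = (\<Sum>n. t^n / fact n * (Ac K a ^^ n) (\<lambda>w. \<Sum>m. h m w) z)"
    by (simp add: Ec_def Es)
  also have "\<dots> = (\<Sum>n. t^n / fact n * (\<Sum>m. (Ac K a ^^ n) (h m) z))"
    using Acn_suminf[OF V hh S(4,3) hb Bs zS] by simp
  also have "\<dots> = (\<Sum>n. t^n / fact n * (\<Sum>m. s^m / fact m * (Ac K a ^^ (n + m)) g z))"
  proof -
    have "(Ac K a ^^ n) (h m) z = s^m / fact m * (Ac K a ^^ (n + m)) g z" for n m
      unfolding h_def Acn_cmult funpow_add by simp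
    then show ?thesis by simp
  qed
  also have "\<dots> = (\<Sum>N. (t+s)^N / fact N * (Ac K a ^^ N) g z)"
    by (rule double_exp[OF ub[OF zS] cA_nonneg])
  also have "\<dots> = Ec K a (t+s) g z" by (simp add: Ec_def)
  finally show ?thesis .
qed


lemma Ec_diff:
  assumes V: "goodV V" and hol: "g1 holomorphic_on V" "g2 holomorphic_on V" and z: "z \<in> V"
  shows "Ec K a t (\<lambda>w. g1 w - g2 w) z = Ec K a t g1 z - Ec K a t g2 z"
proof -
  have h2: "(\<lambda>w. (-1) * g2 w) holomorphic_on V" by (intro holomorphic_intros hol)
  have "(\<lambda>w. g1 w - g2 w) = (\<lambda>w. g1 w + (-1) * g2 w)" by simp
  then have "Ec K a t (\<lambda>w. g1 w - g2 w) z = Ec K a t g1 z + Ec K a t (\<lambda>w. (-1) * g2 w) z"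
    using Ec_add[OF V hol(1) h2 z] by simp
  also have "Ec K a t (\<lambda>w. (-1) * g2 w) z = (-1) * Ec K a t g2 z" by (rule Ec_cmult[OF V hol(2) z])
  finally show ?thesis by simp
qed

lemma seminorm_bound:
  assumes q: "ind_seminorm q" and V: "goodV V"
  obtains S C where "compact S" "S \<subseteq> V" "star0 S" "0 \<in> S" "0 \<le> C"
    "\<And>h M. h holomorphic_on V \<Longrightarrow> (\<forall>z\<in>S. cmod (h z) \<le> M) \<Longrightarrow> q (\<lambda>x. h (complex_of_real x)) \<le> C * M"
proof -
  obtain K C where K: "compact K" "K \<subseteq> V"
    and KC: "\<And>g M. g holomorphic_on V \<Longrightarrow> (\<forall>z\<in>K. cmod (g z) \<le> M) \<Longrightarrow> q (\<lambda>x. g (complex_of_real x)) \<le> C * M"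
    using q goodV_open[OF V] goodV_real[OF V] unfolding ind_seminorm_def by metis
  obtain S where S: "compact S" "K \<subseteq> S" "S \<subseteq> V" "star0 S" "0 \<in> S"
    using star_hull[OF K goodV_star[OF V] goodV_0[OF V]] by blast
  show ?thesis
  proof (rule that[OF S(1,3,4,5), of "max C 0"])
    show "0 \<le> max C 0" by simp
    fix h M assume h: "h holomorphic_on V" "\<forall>z\<in>S. cmod (h z) \<le> M"
    have M0: "0 \<le> M" using h(2) S(5) by (meson norm_ge_zero order_trans)
    have "q (\<lambda>x. h (complex_of_real x)) \<le> C * M" using KC[OF h(1)] h(2) S(2) by blast
    also have "\<dots> \<le> max C 0 * M" using M0 by (intro mult_right_mono) auto
    finally show "q (\<lambda>x. h (complex_of_real x)) \<le> max C 0 * M" .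
  qed
qed

definition Tgrp :: "nat \<Rightarrow> (nat \<Rightarrow> complex) \<Rightarrow> real \<Rightarrow> (real \<Rightarrow> complex) \<Rightarrow> real \<Rightarrow> complex" where
  "Tgrp K a t f = (\<lambda>x. \<Sum>n. (complex_of_real t)^n / fact n * (hardy_poly K a ^^ n) f x)"

lemma Tgrp_Ec:
  assumes "goodV V" "g holomorphic_on V"
  shows "Tgrp K a t (\<lambda>x. g (complex_of_real x)) = (\<lambda>x. Ec K a (complex_of_real t) g (complex_of_real x))"
  by (simp add: Tgrp_def Ec_def hardy_poly_n[OF assms])

lemma Tgrp_in: "f \<in> real_analytic_fns \<Longrightarrow> Tgrp K a t f \<in> real_analytic_fns"
  using realfns_goodV[of f] Tgrp_Ec goodV_realfns Ec_holo by metis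

lemma Tgrp_add:
  assumes "f1 \<in> real_analytic_fns" "f2 \<in> real_analytic_fns"
  shows "Tgrp K a t (\<lambda>x. f1 x + f2 x) = (\<lambda>x. Tgrp K a t f1 x + Tgrp K a t f2 x)"
proof -
  obtain V1 g1 where 1: "goodV V1" "g1 holomorphic_on V1" "f1 = (\<lambda>x. g1 (complex_of_real x))"
    using realfns_goodV[OF assms(1)] by blast
  obtain V2 g2 where 2: "goodV V2" "g2 holomorphic_on V2" "f2 = (\<lambda>x. g2 (complex_of_real x))"
    using realfns_goodV[OF assms(2)] by blast
  define V where "V = V1 \<inter> V2"
  have V: "goodV V" unfolding V_def using goodV_Int[OF 1(1) 2(1)] .
  have h1: "g1 holomorphic_on V" and h2: "g2 holomorphic_on V"
    using 1(2) 2(2) holomorphic_on_subset unfolding V_def by blast+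
  have h12: "(\<lambda>w. g1 w + g2 w) holomorphic_on V" by (intro holomorphic_intros h1 h2)
  have "Tgrp K a t (\<lambda>x. f1 x + f2 x) = Tgrp K a t (\<lambda>x. (\<lambda>w. g1 w + g2 w) (complex_of_real x))"
    using 1(3) 2(3) by simp
  also have "\<dots> = (\<lambda>x. Ec K a (complex_of_real t) (\<lambda>w. g1 w + g2 w) (complex_of_real x))"
    by (rule Tgrp_Ec[OF V h12])
  also have "\<dots> = (\<lambda>x. Tgrp K a t f1 x + Tgrp K a t f2 x)"
    using Ec_add[OF V h1 h2 goodV_real[OF V]] Tgrp_Ec[OF V h1] Tgrp_Ec[OF V h2] 1(3) 2(3) by simp
  finally show ?thesis .
qed

lemma Tgrp_cmult:
  assumes "f \<in> real_analytic_fns"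
  shows "Tgrp K a t (\<lambda>x. c * f x) = (\<lambda>x. c * Tgrp K a t f x)"
proof -
  obtain V g where 1: "goodV V" "g holomorphic_on V" "f = (\<lambda>x. g (complex_of_real x))"
    using realfns_goodV[OF assms(1)] by blast
  have h: "(\<lambda>w. c * g w) holomorphic_on V" by (intro holomorphic_intros 1(2))
  have "Tgrp K a t (\<lambda>x. c * f x) = Tgrp K a t (\<lambda>x. (\<lambda>w. c * g w) (complex_of_real x))"
    using 1(3) by simp
  also have "\<dots> = (\<lambda>x. Ec K a (complex_of_real t) (\<lambda>w. c * g w) (complex_of_real x))"
    by (rule Tgrp_Ec[OF 1(1) h])
  also have "\<dots> = (\<lambda>x. c * Tgrp K a t f x)"
    using Ec_cmult[OF 1(1,2) goodV_real[OF 1(1)]] Tgrp_Ec[OF 1(1,2)] 1(3) by simp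
  finally show ?thesis .
qed

lemma Tgrp_cont:
  assumes q: "ind_seminorm q"
  shows "ind_seminorm (\<lambda>f. q (Tgrp K a t f))"
  unfolding ind_seminorm_def
proof (intro conjI ballI allI impI)
  have qq: "\<forall>f\<in>real_analytic_fns. 0 \<le> q f"
     "\<forall>f\<in>real_analytic_fns. \<forall>g\<in>real_analytic_fns. q (\<lambda>x. f x + g x) \<le> q f + q g"
     "\<forall>c. \<forall>f\<in>real_analytic_fns. q (\<lambda>x. c * f x) = cmod c * q f"
    using q unfolding ind_seminorm_def by blast+
  fix f assume f: "f \<in> real_analytic_fns"
  show "0 \<le> q (Tgrp K a t f)" using qq(1) Tgrp_in[OF f] by blast
  fix c show "q (Tgrp K a t (\<lambda>x. c * f x)) = cmod c * q (Tgrp K a t f)"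
    using qq(3) Tgrp_in[OF f] Tgrp_cmult[OF f] by simp
next
  fix f g assume f: "f \<in> real_analytic_fns" and g: "g \<in> real_analytic_fns"
  have "\<forall>f\<in>real_analytic_fns. \<forall>g\<in>real_analytic_fns. q (\<lambda>x. f x + g x) \<le> q f + q g"
    using q unfolding ind_seminorm_def by blast
  then show "q (Tgrp K a t (\<lambda>x. f x + g x)) \<le> q (Tgrp K a t f) + q (Tgrp K a t g)"
    using Tgrp_add[OF f g] Tgrp_in[OF f] Tgrp_in[OF g] by simp
next
  fix U :: "complex set" assume U: "open U \<and> (\<forall>x::real. complex_of_real x \<in> U)"
  obtain V where V: "goodV V" "V \<subseteq> U" using goodV_sub U by metis
  obtain S C where S: "compact S" "S \<subseteq> V" "star0 S" "0 \<in> S" "0 \<le> C"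
    and SC: "\<And>h M. h holomorphic_on V \<Longrightarrow> (\<forall>z\<in>S. cmod (h z) \<le> M) \<Longrightarrow> q (\<lambda>x. h (complex_of_real x)) \<le> C * M"
    using seminorm_bound[OF q V(1)] by blast
  show "\<exists>KK C. compact KK \<and> KK \<subseteq> U \<and> (\<forall>g M. g holomorphic_on U \<and> (\<forall>z\<in>KK. cmod (g z) \<le> M) \<longrightarrow>
              q (Tgrp K a t (\<lambda>x. g (complex_of_real x))) \<le> C * M)"
  proof (intro exI conjI allI impI)
    show "compact S" "S \<subseteq> U" using S V(2) by auto
    fix g M assume gM: "g holomorphic_on U \<and> (\<forall>z\<in>S. cmod (g z) \<le> M)"
    have hol: "g holomorphic_on V" using gM V(2) holomorphic_on_subset by blast
    have "q (Tgrp K a t (\<lambda>x. g (complex_of_real x))) = q (\<lambda>x. Ec K a (complex_of_real t) g (complex_of_real x))"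
      by (simp add: Tgrp_Ec[OF V(1) hol])
    also have "\<dots> \<le> C * (exp (cmod (complex_of_real t) * cA K a) * M)"
    proof (rule SC)
      show "Ec K a (complex_of_real t) g holomorphic_on V" by (rule Ec_holo[OF V(1) hol])
      show "\<forall>z\<in>S. cmod (Ec K a (complex_of_real t) g z) \<le> exp (cmod (complex_of_real t) * cA K a) * M"
        using Ec_bound[OF V(1) hol S(3,2)] gM by blast
    qed
    finally show "q (Tgrp K a t (\<lambda>x. g (complex_of_real x))) \<le> (C * exp (cmod (complex_of_real t) * cA K a)) * M"
      by (simp add: mult.assoc)
  qed
qed

lemma Tgrp_cont_lin: "cont_lin_op (Tgrp K a t)"
  unfolding cont_lin_op_def
proof (intro conjI ballI allI impI)
  show "\<And>f. f \<in> real_analytic_fns \<Longrightarrow> Tgrp K a t f \<in> real_analytic_fns" by (rule Tgrp_in)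
  show "\<And>f g. f \<in> real_analytic_fns \<Longrightarrow> g \<in> real_analytic_fns \<Longrightarrow>
      Tgrp K a t (\<lambda>x. f x + g x) = (\<lambda>x. Tgrp K a t f x + Tgrp K a t g x)" by (rule Tgrp_add)
  show "\<And>c f. f \<in> real_analytic_fns \<Longrightarrow> Tgrp K a t (\<lambda>x. c * f x) = (\<lambda>x. c * Tgrp K a t f x)"
    by (rule Tgrp_cmult)
  fix q :: "(real \<Rightarrow> complex) \<Rightarrow> real" assume q: "ind_seminorm q"
  show "\<exists>p C. ind_seminorm p \<and> (\<forall>f\<in>real_analytic_fns. q (Tgrp K a t f) \<le> C * p f)"
    by (intro exI[of _ "\<lambda>f. q (Tgrp K a t f)"] exI[of _ 1] conjI Tgrp_cont[OF q]) simp
qed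

lemma Tgrp_group:
  assumes "f \<in> real_analytic_fns"
  shows "Tgrp K a t (Tgrp K a s f) = Tgrp K a (t + s) f"
proof -
  obtain V g where 1: "goodV V" "g holomorphic_on V" "f = (\<lambda>x. g (complex_of_real x))"
    using realfns_goodV[OF assms(1)] by blast
  have "Tgrp K a t (Tgrp K a s f) = Tgrp K a t (\<lambda>x. Ec K a (complex_of_real s) g (complex_of_real x))"
    using Tgrp_Ec[OF 1(1,2)] 1(3) by simp
  also have "\<dots> = (\<lambda>x. Ec K a (complex_of_real t) (Ec K a (complex_of_real s) g) (complex_of_real x))"
    by (rule Tgrp_Ec[OF 1(1) Ec_holo[OF 1(1,2)]])
  also have "\<dots> = (\<lambda>x. Ec K a (complex_of_real (t + s)) g (complex_of_real x))"
    using Ec_group[OF 1(1,2) goodV_real[OF 1(1)]] by simp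
  also have "\<dots> = Tgrp K a (t + s) f" using Tgrp_Ec[OF 1(1,2)] 1(3) by simp
  finally show ?thesis .
qed

lemma Tgrp_zero: "Tgrp K a 0 f = f"
proof -
  have "(\<Sum>n. (complex_of_real 0)^n / fact n * (hardy_poly K a ^^ n) f x) = f x" for x
  proof -
    have "(\<lambda>n. (complex_of_real 0)^n / fact n * (hardy_poly K a ^^ n) f x) =
          (\<lambda>n. ((hardy_poly K a ^^ n) f x / fact n) * 0^n)" by (simp add: fun_eq_iff)
    then show ?thesis by (simp only: powser_zero) simp
  qed
  then show ?thesis by (simp add: Tgrp_def fun_eq_iff)
qed


lemma Tgrp_tendsto:
  assumes f: "f \<in> real_analytic_fns"
  shows "tendsto_A (\<lambda>t. Tgrp K a t f) (Tgrp K a t0 f) (at t0)"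
  unfolding tendsto_A_def
proof (intro allI impI)
  fix q assume q: "ind_seminorm q"
  obtain V g where 1: "goodV V" "g holomorphic_on V" "f = (\<lambda>x. g (complex_of_real x))"
    using realfns_goodV[OF f] by blast
  obtain S C where S: "compact S" "S \<subseteq> V" "star0 S" "0 \<in> S" "0 \<le> C"
    and SC: "\<And>h M. h holomorphic_on V \<Longrightarrow> (\<forall>z\<in>S. cmod (h z) \<le> M) \<Longrightarrow> q (\<lambda>x. h (complex_of_real x)) \<le> C * M"
    using seminorm_bound[OF q 1(1)] by blast
  obtain M where M: "\<forall>w\<in>S. cmod (g w) \<le> M"
    using compact_bound[OF S(1)] holomorphic_on_imp_continuous_on[OF holomorphic_on_subset[OF 1(2) S(2)]] by blast
  define c where "c = cA K a"
  define \<psi> where "\<psi> t = C * (exp (\<bar>t0\<bar> * c) * (\<bar>t - t0\<bar> * c * exp (\<bar>t - t0\<bar> * c) * M))" for t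
  define h where "h t = (\<lambda>w. Ec K a (complex_of_real t) g w - Ec K a (complex_of_real t0) g w)" for t
  have hh: "h t holomorphic_on V" for t
    unfolding h_def by (intro holomorphic_intros Ec_holo[OF 1(1,2)])
  have feq: "(\<lambda>x. Tgrp K a t f x - Tgrp K a t0 f x) = (\<lambda>x. h t (complex_of_real x))" for t
    unfolding h_def 1(3) Tgrp_Ec[OF 1(1,2)] by simp
  have bnd: "q (\<lambda>x. Tgrp K a t f x - Tgrp K a t0 f x) \<le> \<psi> t" for t
  proof -
    define D where "D = (\<lambda>w. Ec K a (complex_of_real (t - t0)) g w - g w)"
    have Dh: "D holomorphic_on V" unfolding D_def by (intro holomorphic_intros Ec_holo[OF 1(1,2)] 1(2))
    have Db: "\<forall>w\<in>S. cmod (D w) \<le> \<bar>t - t0\<bar> * c * exp (\<bar>t - t0\<bar> * c) * M"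
    proof
      fix w assume w: "w \<in> S"
      have "cmod (Ec K a (complex_of_real (t - t0)) g w - g w) \<le> cmod (complex_of_real (t - t0)) * cA K a * exp (cmod (complex_of_real (t - t0)) * cA K a) * M"
        by (rule Ec_bound1[OF 1(1,2) S(3,2) _ w]) (use M in auto)
      then show "cmod (D w) \<le> \<bar>t - t0\<bar> * c * exp (\<bar>t - t0\<bar> * c) * M"
        unfolding D_def c_def norm_of_real by simp
    qed
    have "\<forall>z\<in>S. cmod (h t z) \<le> exp (\<bar>t0\<bar> * c) * (\<bar>t - t0\<bar> * c * exp (\<bar>t - t0\<bar> * c) * M)"
    proof
      fix z assume z: "z \<in> S"
      then have zV: "z \<in> V" using S(2) by auto
      have "Ec K a (complex_of_real t) g z = Ec K a (complex_of_real t0) (Ec K a (complex_of_real (t - t0)) g) z"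
        using Ec_group[OF 1(1,2) zV, of K a "complex_of_real t0" "complex_of_real (t - t0)"] by simp
      then have "h t z = Ec K a (complex_of_real t0) D z"
        unfolding h_def D_def using Ec_diff[OF 1(1) Ec_holo[OF 1(1,2)] 1(2) zV] by simp
      also have "cmod \<dots> \<le> exp (cmod (complex_of_real t0) * cA K a) * (\<bar>t - t0\<bar> * c * exp (\<bar>t - t0\<bar> * c) * M)"
        by (rule Ec_bound[OF 1(1) Dh S(3,2) _ z]) (use Db in auto)
      finally show "cmod (h t z) \<le> exp (\<bar>t0\<bar> * c) * (\<bar>t - t0\<bar> * c * exp (\<bar>t - t0\<bar> * c) * M)"
        by (simp add: c_def)
    qed
    then show ?thesis unfolding feq \<psi>_def by (rule SC[OF hh])
  qed
  have nn: "0 \<le> q (\<lambda>x. Tgrp K a t f x - Tgrp K a t0 f x)" for t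
  proof -
    have "(\<lambda>x. h t (complex_of_real x)) \<in> real_analytic_fns" by (rule goodV_realfns[OF 1(1) hh])
    then show ?thesis using q unfolding ind_seminorm_def feq by blast
  qed
  have "(\<psi> \<longlongrightarrow> \<psi> t0) (at t0)" unfolding \<psi>_def by (intro tendsto_intros)
  then have lim: "(\<psi> \<longlongrightarrow> 0) (at t0)" by (simp add: \<psi>_def)
  show "((\<lambda>t. q (\<lambda>x. Tgrp K a t f x - Tgrp K a t0 f x)) \<longlongrightarrow> 0) (at t0)"
    by (rule tendsto_sandwich[OF always_eventually always_eventually tendsto_const lim]) (use nn bnd in auto)
qed

lemma Tgrp_gen:
  assumes f: "f \<in> real_analytic_fns"
  shows "hardy_poly K a f \<in> real_analytic_fns \<and>
     tendsto_A (\<lambda>t x. (Tgrp K a t f x - f x) / complex_of_real t) (hardy_poly K a f) (at 0)"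
proof
  obtain V g where 1: "goodV V" "g holomorphic_on V" "f = (\<lambda>x. g (complex_of_real x))"
    using realfns_goodV[OF f] by blast
  have Af: "hardy_poly K a f = (\<lambda>x. Ac K a g (complex_of_real x))"
    unfolding 1(3) by (rule hardy_poly_Ac[OF 1(1,2)])
  show "hardy_poly K a f \<in> real_analytic_fns"
    unfolding Af by (rule goodV_realfns[OF 1(1) Ac_holo[OF 1(1,2)]])
  show "tendsto_A (\<lambda>t x. (Tgrp K a t f x - f x) / complex_of_real t) (hardy_poly K a f) (at 0)"
    unfolding tendsto_A_def
  proof (intro allI impI)
    fix q assume q: "ind_seminorm q"
    obtain S C where S: "compact S" "S \<subseteq> V" "star0 S" "0 \<in> S" "0 \<le> C"
      and SC: "\<And>h M. h holomorphic_on V \<Longrightarrow> (\<forall>z\<in>S. cmod (h z) \<le> M) \<Longrightarrow> q (\<lambda>x. h (complex_of_real x)) \<le> C * M"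
      using seminorm_bound[OF q 1(1)] by blast
    obtain M where M: "\<forall>w\<in>S. cmod (g w) \<le> M"
      using compact_bound[OF S(1)] holomorphic_on_imp_continuous_on[OF holomorphic_on_subset[OF 1(2) S(2)]] by blast
    define c where "c = cA K a"
    define \<psi> where "\<psi> t = C * (\<bar>t\<bar> * c^2 * exp (\<bar>t\<bar> * c) * M)" for t :: real
    define H where "H t = (\<lambda>w. (Ec K a (complex_of_real t) g w - g w) / complex_of_real t - Ac K a g w)" for t
    have feq: "(\<lambda>x. (Tgrp K a t f x - f x) / complex_of_real t - hardy_poly K a f x) = (\<lambda>x. H t (complex_of_real x))" for t
      unfolding H_def Af unfolding 1(3) Tgrp_Ec[OF 1(1,2)] by simp
    have Hh: "t \<noteq> 0 \<Longrightarrow> H t holomorphic_on V" for t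
      unfolding H_def by (intro holomorphic_intros Ec_holo[OF 1(1,2)] 1(2) Ac_holo[OF 1(1,2)]) auto
    have bnd: "t \<noteq> 0 \<Longrightarrow> q (\<lambda>x. (Tgrp K a t f x - f x) / complex_of_real t - hardy_poly K a f x) \<le> \<psi> t" for t
    proof -
      assume t: "t \<noteq> 0"
      have "\<forall>z\<in>S. cmod (H t z) \<le> \<bar>t\<bar> * c^2 * exp (\<bar>t\<bar> * c) * M"
      proof
        fix z assume z: "z \<in> S"
        have "cmod ((Ec K a (complex_of_real t) g z - g z) / complex_of_real t - Ac K a g z) \<le> cmod (complex_of_real t) * (cA K a)^2 * exp (cmod (complex_of_real t) * cA K a) * M"
          by (rule Ec_bound2[OF 1(1,2) S(3,2) _ z]) (use M t in auto)
        then show "cmod (H t z) \<le> \<bar>t\<bar> * c^2 * exp (\<bar>t\<bar> * c) * M"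
          unfolding H_def c_def norm_of_real by simp
      qed
      then show ?thesis unfolding feq \<psi>_def by (rule SC[OF Hh[OF t]])
    qed
    have nn: "t \<noteq> 0 \<Longrightarrow> 0 \<le> q (\<lambda>x. (Tgrp K a t f x - f x) / complex_of_real t - hardy_poly K a f x)" for t
    proof -
      assume t: "t \<noteq> 0"
      have "(\<lambda>x. H t (complex_of_real x)) \<in> real_analytic_fns" by (rule goodV_realfns[OF 1(1) Hh[OF t]])
      then show ?thesis using q unfolding ind_seminorm_def feq by blast
    qed
    have "(\<psi> \<longlongrightarrow> \<psi> 0) (at 0)" unfolding \<psi>_def by (intro tendsto_intros)
    then have lim: "(\<psi> \<longlongrightarrow> 0) (at 0)" by (simp add: \<psi>_def)
    have ev: "eventually (\<lambda>t::real. t \<noteq> 0) (at 0)" by (rule eventually_neq_at_within)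
    show "((\<lambda>t. q (\<lambda>x. (Tgrp K a t f x - f x) / complex_of_real t - hardy_poly K a f x)) \<longlongrightarrow> 0) (at 0)"
    proof (rule tendsto_sandwich[OF _ _ tendsto_const lim])
      show "eventually (\<lambda>t. 0 \<le> q (\<lambda>x. (Tgrp K a t f x - f x) / complex_of_real t - hardy_poly K a f x)) (at 0)"
        using ev by eventually_elim (rule nn)
      show "eventually (\<lambda>t. q (\<lambda>x. (Tgrp K a t f x - f x) / complex_of_real t - hardy_poly K a f x) \<le> \<psi> t) (at 0)"
        using ev by eventually_elim (rule bnd)
    qed
  qed
qed

theorem mainTheorem8:
  fixes K :: nat and a :: "nat \<Rightarrow> complex"
  shows "\<exists>T. C0_group T \<and> generates (hardy_poly K a) T"
proof (intro exI conjI)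
  show "C0_group (Tgrp K a)"
    unfolding C0_group_def
    by (intro conjI allI ballI Tgrp_cont_lin Tgrp_group Tgrp_zero Tgrp_tendsto)
  show "generates (hardy_poly K a) (Tgrp K a)"
    unfolding generates_def using Tgrp_gen by blast
qed

end
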